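(* Let $T=K_2$ (the tree on $n=2$ vertices) and $k\ge2$, and let $M$ be the order-$k$ Steiner distance hypermatrix of $T$. If $\det(M)\neq0$, then $\det(M)<0$, i.e., $\operatorname{sgn}(\det(M))=(-1)^{n-1}=-1$.
   Context: For $K_2$ with vertices $1,2$, the order-$k$ Steiner distance hypermatrix $M$ has $(i_1,\dots,i_k)$ entry equal to $0$ if $i_1=\dots=i_k$ and $1$ otherwise (the Steiner distance of a vertex set is the minimum number of edges of a connected subgraph containing it). $\det$ denotes the hyperdeterminant of a symmetric hypermatrix: the unique irreducible polynomial in the entries, normalized so that the identity hypermatrix has value $1$, vanishing exactly when $\sum_{i_2,\dots,i_k}M_{a i_2\cdots i_k}x_{i_2}\cdots x_{i_k}=0$ for all $a$ has a nonzero complex solution. *)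

theory Defs
  imports Main "Jordan_Normal_Form.Determinant"
begin

text \<open>Vertices 1,2 of K_2 are encoded as indices 0,1. An order-k hypermatrix of
dimension 2 is a function on index lists of length k with entries in {0,1}.\<close>

definition steinerK2 :: "nat list \<Rightarrow> real" where
  "steinerK2 is = (if (\<forall>i\<in>set is. i = hd is) then 0 else 1)"

text \<open>Coefficient of x_1^(d-j) x_2^j in the binary form
  F_a(x) = sum over i_2..i_k of M(a,i_2,...,i_k) x_(i_2) ... x_(i_k), where d = k-1.\<close>
definition form_coeff :: "nat \<Rightarrow> (nat list \<Rightarrow> real) \<Rightarrow> nat \<Rightarrow> nat \<Rightarrow> real" where
  "form_coeff k M a j =
     (\<Sum>is\<in>{is. length is = k - 1 \<and> set is \<subseteq> {0,1} \<and> length (filter (\<lambda>i. i = 1) is) = j}.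
        M (a # is))"

definition sylv2 :: "nat \<Rightarrow> (nat list \<Rightarrow> real) \<Rightarrow> real mat" where
  "sylv2 k M = (let d = k - 1 in
     mat (2*d) (2*d) (\<lambda>(r,c).
       if r < d then (if r \<le> c \<and> c - r \<le> d then form_coeff k M 0 (c - r) else 0)
       else (if r - d \<le> c \<and> c - (r - d) \<le> d then form_coeff k M 1 (c - (r - d)) else 0)))"

text \<open>Hyperdeterminant of an order-k, dimension-2 hypermatrix: the resultant of the
 system F_0 = F_1 = 0 (for two variables the multivariate resultant is the classical
 Sylvester resultant of the two binary forms), normalized so that the identity
 hypermatrix has value 1.\<close>
definition hyperdet2 :: "nat \<Rightarrow> (nat list \<Rightarrow> real) \<Rightarrow> real" where
  "hyperdet2 k M = det (sylv2 k M)"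

end

theory Submission
  imports Defs
begin


definition Lset :: "nat \<Rightarrow> nat \<Rightarrow> nat list set" where
  "Lset n j = {is. length is = n \<and> set is \<subseteq> {0,1} \<and> length (filter (\<lambda>i. i = 1) is) = j}"

lemma Lset_Suc: "Lset (Suc n) j = Cons 0 ` Lset n j \<union> (if j = 0 then {} else Cons 1 ` Lset n (j - 1))"
proof (rule equalityI; rule subsetI)
  fix xs assume "xs \<in> Lset (Suc n) j"
  then obtain a ys where xs: "xs = a # ys" and l: "length ys = n" and s: "a \<in> {0,1}" "set ys \<subseteq> {0,1}"
    and f: "length (filter (\<lambda>i. i = 1) xs) = j"
    unfolding Lset_def by (cases xs) auto
  show "xs \<in> Cons 0 ` Lset n j \<union> (if j = 0 then {} else Cons 1 ` Lset n (j - 1))"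
  proof (cases "a = 0")
    case True then show ?thesis using xs l s f by (auto simp: Lset_def)
  next
    case False then have "a = 1" using s by auto
    then show ?thesis using xs l s f by (auto simp: Lset_def)
  qed
next
  fix xs assume "xs \<in> Cons 0 ` Lset n j \<union> (if j = 0 then {} else Cons 1 ` Lset n (j - 1))"
  then show "xs \<in> Lset (Suc n) j" by (auto simp: Lset_def split: if_splits)
qed

lemma finite_Lset: "finite (Lset n j)"
proof -
  have "Lset n j \<subseteq> {xs. set xs \<subseteq> {0,1} \<and> length xs = n}" by (auto simp: Lset_def)
  moreover have "finite {xs. set xs \<subseteq> {0::nat,1} \<and> length xs = n}"
    by (rule finite_lists_length_eq) auto
  ultimately show ?thesis by (rule finite_subset)
qed

lemma card_Lset: "card (Lset n j) = n choose j"
proof (induction n arbitrary: j)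
  case 0
  have "Lset 0 j = (if j = 0 then {[]} else {})" by (auto simp: Lset_def)
  then show ?case by simp
next
  case (Suc n)
  have d: "Cons 0 ` Lset n j \<inter> (if j = 0 then {} else Cons 1 ` Lset n (j - 1)) = {}" by auto
  have "card (Lset (Suc n) j) = card (Cons 0 ` Lset n j) + card (if j = 0 then {} else Cons 1 ` Lset n (j - 1))"
    unfolding Lset_Suc by (rule card_Un_disjoint) (auto simp: finite_Lset)
  also have "\<dots> = card (Lset n j) + (if j = 0 then 0 else card (Lset n (j - 1)))"
    by (auto simp: card_image)
  also have "\<dots> = Suc n choose j" using Suc by (cases j) auto
  finally show ?case .
qed

lemma fc0: assumes "k \<ge> 2" "j \<le> k - 1"
  shows "form_coeff k steinerK2 0 j = (if j = 0 then 0 else real (k - 1 choose j))"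
proof -
  have "form_coeff k steinerK2 0 j = (\<Sum>is\<in>Lset (k-1) j. steinerK2 (0 # is))"
    unfolding form_coeff_def Lset_def ..
  also have "\<dots> = (\<Sum>is\<in>Lset (k-1) j. (if j = 0 then 0 else 1))"
  proof (rule sum.cong)
    fix xs assume "xs \<in> Lset (k-1) j"
    then have s: "set xs \<subseteq> {0,1}" and f: "length (filter (\<lambda>i. i = 1) xs) = j" by (auto simp: Lset_def)
    have "(\<forall>i\<in>set xs. i = 0) \<longleftrightarrow> j = 0"
    proof
      assume a: "\<forall>i\<in>set xs. i = 0"
      have "filter (\<lambda>i. i = 1) xs = []" using a by (auto simp: filter_empty_conv)
      then show "j = 0" using f by simp
    next
      assume "j = 0" then show "\<forall>i\<in>set xs. i = 0" using f s by (auto simp: filter_empty_conv)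
    qed
    then show "steinerK2 (0 # xs) = (if j = 0 then 0 else 1)" by (auto simp: steinerK2_def)
  qed simp
  also have "\<dots> = (if j = 0 then 0 else real (k - 1 choose j))" by (simp add: card_Lset)
  finally show ?thesis .
qed

lemma fc1: assumes "k \<ge> 2" "j \<le> k - 1"
  shows "form_coeff k steinerK2 1 j = (if j = k - 1 then 0 else real (k - 1 choose j))"
proof -
  have "form_coeff k steinerK2 1 j = (\<Sum>is\<in>Lset (k-1) j. steinerK2 (1 # is))"
    unfolding form_coeff_def Lset_def ..
  also have "\<dots> = (\<Sum>is\<in>Lset (k-1) j. (if j = k - 1 then 0 else 1))"
  proof (rule sum.cong)
    fix xs assume "xs \<in> Lset (k-1) j"
    then have s: "set xs \<subseteq> {0,1}" and f: "length (filter (\<lambda>i. i = 1) xs) = j" and l: "length xs = k - 1" by (auto simp: Lset_def)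
    have "(\<forall>i\<in>set xs. i = 1) \<longleftrightarrow> j = k - 1"
    proof
      assume a: "\<forall>i\<in>set xs. i = 1"
      have "filter (\<lambda>i. i = 1) xs = xs" using a by (simp add: filter_id_conv)
      then show "j = k - 1" using f l by simp
    next
      assume a: "j = k - 1"
      show "\<forall>i\<in>set xs. i = 1"
      proof (rule ccontr)
        assume "\<not> (\<forall>i\<in>set xs. i = 1)"
        then obtain i where "i \<in> set xs" "i \<noteq> 1" by blast
        then have "length (filter (\<lambda>i. i = 1) xs) < length xs" by (intro length_filter_less) auto
        then show False using a f l by simp
      qed
    qed
    then show "steinerK2 (1 # xs) = (if j = k - 1 then 0 else 1)" by (auto simp: steinerK2_def)
  qed simp
  also have "\<dots> = (if j = k - 1 then 0 else real (k - 1 choose j))" by (simp add: card_Lset)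
  finally show ?thesis .
qed



lemma blocks:
  fixes a0 a1 :: "nat \<Rightarrow> real" and d :: nat
  assumes diff: "\<And>j. j \<le> d \<Longrightarrow> a1 j - a0 j = (if j = 0 then 1 else if j = d then -1 else 0)"
  shows "det (mat (2*d) (2*d) (\<lambda>(r,c). if r < d then (if r \<le> c \<and> c - r \<le> d then a0 (c - r) else 0)
       else (if r - d \<le> c \<and> c - (r - d) \<le> d then a1 (c - (r - d)) else 0)))
    = (-1)^d * det (mat d d (\<lambda>(r,c). (if r \<le> c then a0 (c-r) else 0) + (if c \<le> r then a0 (c+d-r) else 0)))"
proof -
  define S where "S = mat (2*d) (2*d) (\<lambda>(r,c). if r < d then (if r \<le> c \<and> c - r \<le> d then a0 (c - r) else 0)
       else (if r - d \<le> c \<and> c - (r - d) \<le> d then a1 (c - (r - d)) else 0))"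
  define U where "U = mat d d (\<lambda>(r,c). if r \<le> c then a0 (c-r) else 0)"
  define V where "V = mat d d (\<lambda>(r,c). if c \<le> r then a0 (c+d-r) else 0)"
  define W where "W = mat d d (\<lambda>(r,c). if r \<le> c then a1 (c-r) else 0)"
  define Z where "Z = mat d d (\<lambda>(r,c). if c \<le> r then a1 (c+d-r) else 0)"
  define L where "L = four_block_mat (1\<^sub>m d) (0\<^sub>m d d) ((-1) \<cdot>\<^sub>m 1\<^sub>m d) (1\<^sub>m d :: real mat)"
  have c: "U \<in> carrier_mat d d" "V \<in> carrier_mat d d" "W \<in> carrier_mat d d" "Z \<in> carrier_mat d d"
    unfolding U_def V_def W_def Z_def by auto
  have SB: "S = four_block_mat U V W Z"
  proof (rule eq_matI)
    fix i j assume ij: "i < dim_row (four_block_mat U V W Z)" "j < dim_col (four_block_mat U V W Z)"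
    then have "i < d + d" "j < d + d" using c by auto
    then show "S $$ (i, j) = four_block_mat U V W Z $$ (i, j)"
      using c unfolding S_def U_def V_def W_def Z_def
      by (auto simp: index_mat_four_block)
  qed (use c in \<open>auto simp: S_def\<close>)
  have detL: "det L = 1" unfolding L_def
    by (subst det_four_block_mat_upper_right_zero[of _ d _ d]) auto
  have LS: "L * S = four_block_mat U V (1\<^sub>m d) ((-1) \<cdot>\<^sub>m 1\<^sub>m d)"
  proof -
    have "L * S = four_block_mat (1\<^sub>m d * U + 0\<^sub>m d d * W) (1\<^sub>m d * V + 0\<^sub>m d d * Z)
       ((-1) \<cdot>\<^sub>m 1\<^sub>m d * U + 1\<^sub>m d * W) ((-1) \<cdot>\<^sub>m 1\<^sub>m d * V + 1\<^sub>m d * Z)"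
      unfolding L_def SB by (rule mult_four_block_mat) (use c in auto)
    also have "\<dots> = four_block_mat U V (1\<^sub>m d) ((-1) \<cdot>\<^sub>m 1\<^sub>m d)"
    proof -
      have e1: "1\<^sub>m d * U + 0\<^sub>m d d * W = U" using c by simp
      have e2: "1\<^sub>m d * V + 0\<^sub>m d d * Z = V" using c by simp
      have e3: "(-1) \<cdot>\<^sub>m 1\<^sub>m d * U + 1\<^sub>m d * W = 1\<^sub>m d"
      proof (rule eq_matI)
        fix i j assume "i < dim_row (1\<^sub>m d :: real mat)" "j < dim_col (1\<^sub>m d :: real mat)"
        then have ij: "i < d" "j < d" by auto
        have "((-1) \<cdot>\<^sub>m 1\<^sub>m d * U + 1\<^sub>m d * W) $$ (i,j) = W $$ (i,j) - U $$ (i,j)"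
          using c ij by simp
        also have "\<dots> = 1\<^sub>m d $$ (i,j)" proof (cases "i \<le> j")
          case True
          have "j - i \<le> d" "j - i \<noteq> d" using ij by auto
          then show ?thesis using True ij diff[of "j - i"] by (auto simp: U_def W_def)
        qed (use ij in \<open>auto simp: U_def W_def\<close>)
        finally show "((-1) \<cdot>\<^sub>m 1\<^sub>m d * U + 1\<^sub>m d * W) $$ (i,j) = 1\<^sub>m d $$ (i,j)" .
      qed (use c in auto)
      have e4: "(-1) \<cdot>\<^sub>m 1\<^sub>m d * V + 1\<^sub>m d * Z = (-1) \<cdot>\<^sub>m 1\<^sub>m d"
      proof (rule eq_matI)
        fix i j assume "i < dim_row ((-1) \<cdot>\<^sub>m 1\<^sub>m d :: real mat)" "j < dim_col ((-1) \<cdot>\<^sub>m 1\<^sub>m d :: real mat)"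
        then have ij: "i < d" "j < d" by auto
        have "((-1) \<cdot>\<^sub>m 1\<^sub>m d * V + 1\<^sub>m d * Z) $$ (i,j) = Z $$ (i,j) - V $$ (i,j)"
          using c ij by simp
        also have "\<dots> = ((-1) \<cdot>\<^sub>m 1\<^sub>m d) $$ (i,j)" proof (cases "j \<le> i")
          case True
          have "j + d - i \<le> d" "j + d - i \<noteq> 0" "j + d - i = d \<longleftrightarrow> i = j" using ij True by auto
          then show ?thesis using True ij diff[of "j + d - i"] by (auto simp: V_def Z_def)
        qed (use ij in \<open>auto simp: V_def Z_def\<close>)
        finally show "((-1) \<cdot>\<^sub>m 1\<^sub>m d * V + 1\<^sub>m d * Z) $$ (i,j) = ((-1) \<cdot>\<^sub>m 1\<^sub>m d) $$ (i,j)" .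
      qed (use c in auto)
      show ?thesis using e1 e2 e3 e4 by simp
    qed
    finally show ?thesis .
  qed
  have "det S = det (L * S)"
    using det_mult[of L "2*d" S] detL by (simp add: L_def S_def mult_2)
  also have "\<dots> = det (U * ((-1) \<cdot>\<^sub>m 1\<^sub>m d) - V * 1\<^sub>m d)"
    unfolding LS by (rule det_four_block_mat) (use c in auto)
  also have "U * ((-1) \<cdot>\<^sub>m 1\<^sub>m d) - V * 1\<^sub>m d = (-1) \<cdot>\<^sub>m (U + V)"
    by (rule eq_matI) (use c in auto)
  also have "det \<dots> = (-1)^d * det (U + V)" using c by simp
  also have "U + V = mat d d (\<lambda>(r,c). (if r \<le> c then a0 (c-r) else 0) + (if c \<le> r then a0 (c+d-r) else 0))"
    by (rule eq_matI) (auto simp: U_def V_def)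
  finally show ?thesis unfolding S_def .
qed



definition omg :: "nat \<Rightarrow> complex" where "omg d = cis (2 * pi / real d)"

lemma omg_pow: "omg d ^ n = cis (real n * (2 * pi / real d))"
  unfolding omg_def by (rule DeMoivre)

lemma omg_d: assumes "d > 0" shows "omg d ^ d = 1"
  using assms by (simp add: omg_pow)

lemma omg_pow_eq_1: assumes "d > 0" shows "omg d ^ n = 1 \<longleftrightarrow> d dvd n"
proof
  assume "omg d ^ n = 1"
  then have "cos (real n * (2 * pi / real d)) = 1" unfolding omg_pow by (simp add: complex_eq_iff)
  then obtain m :: int where m: "real n * (2 * pi / real d) = m * 2 * pi" by (auto simp: cos_one_2pi_int)
  then have "real n = real_of_int m * real d" using assms by (simp add: field_simps)
  then have "int n = m * int d" by (metis of_int_eq_iff of_int_mult of_int_of_nat_eq)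
  then show "d dvd n" by (metis dvd_triv_right int_dvd_int_iff)
next
  assume "d dvd n"
  then obtain q where "n = d * q" by auto
  then show "omg d ^ n = 1" using omg_d[OF assms] by (simp add: power_mult)
qed

lemma omg_nz: "omg d \<noteq> 0" unfolding omg_def by simp

lemma omg_cnj: "omg d * cnj (omg d) = 1"
  unfolding omg_def by (simp add: cis_cnj cis_mult)

lemma omg_cnj_pow: "omg d ^ i * cnj (omg d) ^ i = 1"
  by (metis omg_cnj power_mult_distrib power_one)

lemma omg_rev: assumes "d > 0" "j \<le> d" shows "omg d ^ (d - j) = cnj (omg d ^ j)"
proof -
  have "omg d ^ (d - j) * omg d ^ j = 1" using assms omg_d[OF assms(1)] by (simp flip: power_add)
  moreover have "cnj (omg d ^ j) * omg d ^ j = 1" using omg_cnj_pow[of d j] by (simp add: mult.commute)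
  ultimately show ?thesis using omg_nz[of d]
    by (metis mult_right_cancel power_not_zero)
qed

lemma omg_half: assumes "d > 0" "even d" shows "omg d ^ (d div 2) = -1"
proof -
  let ?x = "omg d ^ (d div 2)"
  have "?x ^ 2 = 1" using assms omg_d[OF assms(1)] by (simp flip: power_mult)
  moreover have "?x \<noteq> 1" using assms omg_pow_eq_1[OF assms(1), of "d div 2"]
    by (auto dest: dvd_imp_le)
  ultimately show ?thesis by (metis power2_eq_1_iff)
qed

lemma geo0: assumes "d > 0" "z ^ d = 1" "z \<noteq> (1::complex)" shows "(\<Sum>m<d. z ^ m) = 0"
  using assms by (simp add: sum_gp_strict)

lemma omg_ne: assumes "d > 0" "i < d" "j < d" "i \<noteq> j" shows "omg d ^ i * cnj (omg d) ^ j \<noteq> 1"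
proof (cases "j < i")
  case True
  have "omg d ^ i * cnj (omg d) ^ j = omg d ^ (i - j) * (omg d ^ j * cnj (omg d) ^ j)"
    using True by (simp add: power_add[symmetric] mult.assoc)
  also have "\<dots> = omg d ^ (i - j)" by (simp add: omg_cnj_pow)
  finally show ?thesis using omg_pow_eq_1[OF assms(1), of "i - j"] True assms by (auto dest: dvd_imp_le)
next
  case False
  then have ij: "i < j" using assms by auto
  have "omg d ^ i * cnj (omg d) ^ j = (omg d ^ i * cnj (omg d) ^ i) * cnj (omg d ^ (j - i))"
    using ij by (simp add: power_add[symmetric] mult.assoc)
  also have "\<dots> = cnj (omg d ^ (j - i))" by (simp add: omg_cnj_pow)
  finally have eq: "omg d ^ i * cnj (omg d) ^ j = cnj (omg d ^ (j - i))" .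
  have "omg d ^ (j - i) \<noteq> 1" using omg_pow_eq_1[OF assms(1), of "j - i"] ij assms
    by (auto dest: dvd_imp_le)
  then have "cnj (omg d ^ (j - i)) \<noteq> 1" by (metis complex_cnj_one_iff)
  then show ?thesis unfolding eq .
qed



lemma circ_sum:
  fixes A :: "nat \<Rightarrow> complex" and z :: complex
  assumes z: "z ^ d = 1" and i: "i < d"
  shows "(\<Sum>m<d. ((if i \<le> m then A (m - i) else 0) + (if m \<le> i then A (m + d - i) else 0)) * z ^ m)
         = z ^ i * (\<Sum>l\<le>d. A l * z ^ l)"
proof -
  have "(\<Sum>m<d. ((if i \<le> m then A (m - i) else 0) + (if m \<le> i then A (m + d - i) else 0)) * z ^ m)
     = (\<Sum>m<d. (if i \<le> m then A (m - i) * z ^ m else 0)) + (\<Sum>m<d. (if m \<le> i then A (m + d - i) * z ^ m else 0))"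
    by (simp add: sum.distrib[symmetric]) (rule sum.cong, auto simp: distrib_right)
  also have "(\<Sum>m<d. (if i \<le> m then A (m - i) * z ^ m else 0)) = (\<Sum>m\<in>{i..<d}. A (m - i) * z ^ m)"
    by (rule sum.mono_neutral_cong_right) auto
  also have "\<dots> = (\<Sum>l\<in>{0..<d-i}. A l * z ^ (l + i))"
    using sum.shift_bounds_nat_ivl[of "\<lambda>m. A (m - i) * z ^ m" 0 i "d - i"] i by simp
  also have "\<dots> = z ^ i * (\<Sum>l\<in>{0..<d-i}. A l * z ^ l)"
    by (simp add: sum_distrib_left power_add mult_ac)
  also have "(\<Sum>m<d. (if m \<le> i then A (m + d - i) * z ^ m else 0)) = (\<Sum>m\<in>{0..i}. A (m + d - i) * z ^ m)"
    by (rule sum.mono_neutral_cong_right) (use i in auto)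
  also have "\<dots> = (\<Sum>m\<in>{0..i}. z ^ i * (A (m + (d - i)) * z ^ (m + (d - i))))"
  proof (rule sum.cong)
    fix m assume "m \<in> {0..i}"
    have "z ^ i * z ^ (m + (d - i)) = z ^ m * z ^ d" using i by (simp flip: power_add)
    then show "A (m + d - i) * z ^ m = z ^ i * (A (m + (d - i)) * z ^ (m + (d - i)))"
      using i z by (simp add: mult_ac)
  qed simp
  also have "\<dots> = (\<Sum>l\<in>{0 + (d-i)..i + (d-i)}. z ^ i * (A l * z ^ l))"
    by (rule sum.shift_bounds_cl_nat_ivl[symmetric])
  also have "\<dots> = z ^ i * (\<Sum>l\<in>{d-i..<Suc d}. A l * z ^ l)"
    using i by (simp add: sum_distrib_left atLeastLessThanSuc_atLeastAtMost)
  also have "z ^ i * (\<Sum>l\<in>{0..<d-i}. A l * z ^ l) + \<dots> = z ^ i * (\<Sum>l\<in>{0..<Suc d}. A l * z ^ l)"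
    by (simp add: distrib_left[symmetric] sum.atLeastLessThan_concat)
  also have "{0..<Suc d} = {..d}" by auto
  finally show ?thesis .
qed

lemma FG:
  assumes d: "d > 0"
  shows "mat d d (\<lambda>(i,j). (omg d ^ j) ^ i) * mat d d (\<lambda>(i,j). (cnj (omg d) ^ j) ^ i) = of_nat d \<cdot>\<^sub>m 1\<^sub>m d"
proof (rule eq_matI)
  fix i j assume "i < dim_row (of_nat d \<cdot>\<^sub>m 1\<^sub>m d :: complex mat)" "j < dim_col (of_nat d \<cdot>\<^sub>m 1\<^sub>m d :: complex mat)"
  then have ij: "i < d" "j < d" by auto
  have "(mat d d (\<lambda>(i,j). (omg d ^ j) ^ i) * mat d d (\<lambda>(i,j). (cnj (omg d) ^ j) ^ i)) $$ (i,j)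
     = (\<Sum>m<d. (omg d ^ i * cnj (omg d) ^ j) ^ m)"
    using ij by (simp add: scalar_prod_def atLeast0LessThan power_mult_distrib
         flip: power_mult) (simp add: mult.commute)
  also have "\<dots> = (of_nat d \<cdot>\<^sub>m 1\<^sub>m d :: complex mat) $$ (i,j)"
  proof (cases "i = j")
    case True
    then show ?thesis using ij by (simp add: omg_cnj_pow)
  next
    case False
    have "(omg d ^ i * cnj (omg d) ^ j) ^ d = (omg d ^ d) ^ i * (cnj (omg d ^ d)) ^ j"
      by (simp add: power_mult_distrib flip: power_mult) (simp add: mult.commute)
    then have "(omg d ^ i * cnj (omg d) ^ j) ^ d = 1" using omg_d[OF d] by simp
    then show ?thesis using False ij geo0[OF d _ omg_ne[OF d ij False]] by simp
  qed
  finally show "(mat d d (\<lambda>(i,j). (omg d ^ j) ^ i) * mat d d (\<lambda>(i,j). (cnj (omg d) ^ j) ^ i)) $$ (i,j)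
     = (of_nat d \<cdot>\<^sub>m 1\<^sub>m d :: complex mat) $$ (i,j)" .
qed auto

lemma circ_det:
  fixes a :: "nat \<Rightarrow> real"
  assumes d: "d > 0"
  shows "complex_of_real (det (mat d d (\<lambda>(r,c). (if r \<le> c then a (c-r) else 0) + (if c \<le> r then a (c+d-r) else 0))))
     = (\<Prod>j<d. (\<Sum>l\<le>d. complex_of_real (a l) * (omg d ^ j) ^ l))"
proof -
  define B where "B = mat d d (\<lambda>(r,c). (if r \<le> c then a (c-r) else 0) + (if c \<le> r then a (c+d-r) else 0))"
  define Bc where "Bc = map_mat complex_of_real B"
  define F where "F = mat d d (\<lambda>(i,j). (omg d ^ j) ^ i)"
  define G where "G = mat d d (\<lambda>(i,j). (cnj (omg d) ^ j) ^ i)"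
  define lam where "lam j = (\<Sum>l\<le>d. complex_of_real (a l) * (omg d ^ j) ^ l)" for j
  define Dg where "Dg = mat d d (\<lambda>(i,j). if i = j then lam j else 0)"
  have cB: "Bc \<in> carrier_mat d d" "F \<in> carrier_mat d d" "G \<in> carrier_mat d d" "Dg \<in> carrier_mat d d"
    by (auto simp: Bc_def B_def F_def G_def Dg_def)
  have "det F * det G = det (of_nat d \<cdot>\<^sub>m 1\<^sub>m d :: complex mat)"
    using FG[OF d] det_mult[OF cB(2,3)] unfolding F_def G_def by simp
  also have "\<dots> = of_nat d ^ d" by simp
  finally have detF: "det F \<noteq> 0" using d by auto
  have key: "Bc * F = F * Dg"
  proof (rule eq_matI)
    fix i j assume "i < dim_row (F * Dg)" "j < dim_col (F * Dg)"
    then have ij: "i < d" "j < d" using cB by auto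
    let ?z = "omg d ^ j"
    have z: "?z ^ d = 1" using omg_d[OF d] by (simp flip: power_mult) (simp add: power_mult mult.commute)
    have "(Bc * F) $$ (i,j) = (\<Sum>m<d. complex_of_real (B $$ (i,m)) * ?z ^ m)"
      using ij by (simp add: Bc_def B_def F_def scalar_prod_def atLeast0LessThan)
    also have "\<dots> = (\<Sum>m<d. ((if i \<le> m then complex_of_real (a (m - i)) else 0) + (if m \<le> i then complex_of_real (a (m + d - i)) else 0)) * ?z ^ m)"
      by (rule sum.cong) (use ij in \<open>auto simp: B_def\<close>)
    also have "\<dots> = ?z ^ i * lam j"
      unfolding lam_def by (rule circ_sum[OF z ij(1)])
    also have "\<dots> = (F * Dg) $$ (i,j)"
      using ij by (simp add: F_def Dg_def scalar_prod_def atLeast0LessThan if_distrib cong: if_cong)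
    finally show "(Bc * F) $$ (i,j) = (F * Dg) $$ (i,j)" .
  qed (use cB in auto)
  have "det Bc * det F = det Dg * det F"
    using det_mult[OF cB(1,2)] det_mult[OF cB(2,4)] key by (auto simp: mult.commute)
  then have "det Bc = det Dg" using detF by simp
  also have "det Dg = prod_list (diag_mat Dg)"
    by (rule det_upper_triangular[OF _ cB(4)]) (auto simp: upper_triangular_def Dg_def)
  also have "\<dots> = (\<Prod>j<d. lam j)"
    by (simp add: prod_list_diag_prod Dg_def atLeast0LessThan)
  finally have "det Bc = (\<Prod>j<d. lam j)" .
  moreover have "det Bc = complex_of_real (det B)" unfolding Bc_def by (rule of_real_hom.hom_det)
  ultimately show ?thesis unfolding B_def lam_def by simp
qed



lemma pair_prod:
  fixes f :: "nat \<Rightarrow> complex"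
  assumes d: "d > 0" and sym: "\<And>j. 0 < j \<Longrightarrow> j < d \<Longrightarrow> f (d - j) = cnj (f j)"
  shows "\<exists>r\<ge>0. (\<Prod>j\<in>{1..<d}. f j) = complex_of_real r * (if even d then f (d div 2) else 1)"
proof -
  define h where "h = (d - 1) div 2"
  define A where "A = {1..h}"
  define B where "B = {d-h..<d}"
  define M where "M = (if even d then {d div 2} else {})"
  have Bim: "B = (\<lambda>j. d - j) ` A"
  proof (rule equalityI; rule subsetI)
    fix x assume "x \<in> B"
    then have "d - x \<in> A" "x = d - (d - x)" by (auto simp: A_def B_def h_def)
    then show "x \<in> (\<lambda>j. d - j) ` A" by blast
  next
    fix x assume "x \<in> (\<lambda>j. d - j) ` A"
    then show "x \<in> B" by (auto simp: A_def B_def h_def)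
  qed
  have inj: "inj_on (\<lambda>j. d - j) A" by (rule inj_onI) (auto simp: A_def h_def)
  have U: "{1..<d} = A \<union> B \<union> M" using d by (auto simp: A_def B_def M_def h_def; presburger)
  have dAB: "A \<inter> B = {}" by (auto simp: A_def B_def h_def)
  have dABM: "(A \<union> B) \<inter> M = {}" using d by (auto simp: A_def B_def M_def h_def; presburger)
  have fin: "finite A" "finite B" "finite M" by (auto simp: A_def B_def M_def)
  have "(\<Prod>j\<in>{1..<d}. f j) = (\<Prod>j\<in>A. f j) * (\<Prod>j\<in>B. f j) * (\<Prod>j\<in>M. f j)"
    unfolding U using fin dAB dABM by (simp add: prod.union_disjoint)
  also have "(\<Prod>j\<in>B. f j) = (\<Prod>j\<in>A. f (d - j))"
    unfolding Bim by (rule prod.reindex[OF inj, unfolded comp_def])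
  also have "(\<Prod>j\<in>A. f j) * (\<Prod>j\<in>A. f (d - j)) = (\<Prod>j\<in>A. f j * cnj (f j))"
    by (simp add: prod.distrib[symmetric]) (rule prod.cong, auto simp: A_def h_def intro!: arg_cong[where f="\<lambda>x. f _ * x"] sym)
  also have "\<dots> = complex_of_real (\<Prod>j\<in>A. (cmod (f j))^2)"
    unfolding of_real_prod by (simp only: complex_norm_square)
  also have "(\<Prod>j\<in>M. f j) = (if even d then f (d div 2) else 1)" by (simp add: M_def)
  finally show ?thesis by (intro exI[of _ "\<Prod>j\<in>A. (cmod (f j))^2"]) (auto intro: prod_nonneg)
qed


lemma binom_sum:
  fixes z :: complex
  shows "(\<Sum>l\<le>d. complex_of_real (if l = 0 then 0 else real (d choose l)) * z ^ l) = (1 + z) ^ d - 1"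
proof -
  have "(1 + z) ^ d = (\<Sum>l\<le>d. of_nat (d choose l) * z ^ l)"
    using binomial_ring[of z 1 d] by (simp add: add.commute)
  also have "\<dots> = (\<Sum>l\<le>d. complex_of_real (if l = 0 then 0 else real (d choose l)) * z ^ l) + 1"
    by (simp add: sum.atMost_shift)
  finally show ?thesis by simp
qed

theorem mainTheorem9:
  fixes k :: nat
  assumes "k \<ge> 2"
    and "hyperdet2 k steinerK2 \<noteq> 0"
  shows "hyperdet2 k steinerK2 < 0"
proof -
  define d where "d = k - 1"
  have d: "d > 0" using assms(1) by (simp add: d_def)
  define a0 where "a0 j = (if j = 0 then 0 else real (d choose j))" for j
  define a1 where "a1 j = (if j = d then 0 else real (d choose j))" for j
  have e0: "form_coeff k steinerK2 0 j = a0 j" if "j \<le> d" for j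
    using fc0[OF assms(1), of j] that by (simp add: a0_def d_def)
  have e1: "form_coeff k steinerK2 1 j = a1 j" if "j \<le> d" for j
    using fc1[OF assms(1), of j] that by (simp add: a1_def d_def)
  have e1': "form_coeff k steinerK2 (Suc 0) j = a1 j" if "j \<le> d" for j
    using e1[OF that] by simp
  have sy: "sylv2 k steinerK2 = mat (2*d) (2*d) (\<lambda>(r,c). if r < d then (if r \<le> c \<and> c - r \<le> d then a0 (c - r) else 0)
       else (if r - d \<le> c \<and> c - (r - d) \<le> d then a1 (c - (r - d)) else 0))"
    unfolding sylv2_def Let_def d_def[symmetric]
    by (rule cong[OF refl[of "mat (2*d) (2*d)"]], rule ext, clarify)
       (auto simp: e0 e1 e1')
  have diff: "a1 j - a0 j = (if j = 0 then 1 else if j = d then -1 else 0)" if "j \<le> d" for j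
    using d that by (auto simp: a0_def a1_def)
  have h1: "hyperdet2 k steinerK2 = (-1)^d * det (mat d d (\<lambda>(r,c). (if r \<le> c then a0 (c-r) else 0) + (if c \<le> r then a0 (c+d-r) else 0)))"
    unfolding hyperdet2_def sy by (rule blocks) (rule diff)
  define lam where "lam j = (1 + omg d ^ j) ^ d - 1" for j
  have h2: "complex_of_real (det (mat d d (\<lambda>(r,c). (if r \<le> c then a0 (c-r) else 0) + (if c \<le> r then a0 (c+d-r) else 0))))
     = (\<Prod>j<d. lam j)"
  proof -
    have "(\<Sum>l\<le>d. complex_of_real (a0 l) * (omg d ^ j) ^ l) = lam j" for j
      unfolding a0_def lam_def by (rule binom_sum)
    then show ?thesis using circ_det[OF d, of a0] by simp
  qed
  have "{..<d} = insert 0 {1..<d}" using d by auto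
  then have h3: "(\<Prod>j<d. lam j) = lam 0 * (\<Prod>j\<in>{1..<d}. lam j)" by simp
  have l0: "lam 0 = 2 ^ d - 1" by (simp add: lam_def)
  have sym: "lam (d - j) = cnj (lam j)" if "0 < j" "j < d" for j
    using omg_rev[OF d, of j] that by (simp add: lam_def)
  obtain r where r: "r \<ge> 0" "(\<Prod>j\<in>{1..<d}. lam j) = complex_of_real r * (if even d then lam (d div 2) else 1)"
    using pair_prod[of d lam, OF d sym] by blast
  have lh: "lam (d div 2) = -1" if "even d"
    using omg_half[OF d that] d by (simp add: lam_def)
  have X: "complex_of_real (hyperdet2 k steinerK2) = (-1)^d * ((2^d - 1) * (complex_of_real r * (if even d then lam (d div 2) else 1)))"
    unfolding h1 of_real_mult of_real_power h2 h3 l0 r(2) by simp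
  have Y: "(-1)^d * ((2^d - 1) * (complex_of_real r * (if even d then lam (d div 2) else 1)))
     = complex_of_real (- ((2 ^ d - 1) * r))"
  proof (cases "even d")
    case True
    then show ?thesis using lh by simp
  next
    case False
    then have "(-1::complex)^d = -1" by simp
    then show ?thesis using False by simp
  qed
  have "complex_of_real (hyperdet2 k steinerK2) = complex_of_real (- ((2 ^ d - 1) * r))"
    using X Y by simp
  then have eq: "hyperdet2 k steinerK2 = - ((2 ^ d - 1) * r)" using of_real_eq_iff by blast
  have "(2::real) ^ d \<ge> 1" by simp
  then have "hyperdet2 k steinerK2 \<le> 0" unfolding eq using r(1) by simp
  with assms(2) show ?thesis by simp
qed

end
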